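(* (Dual SDP upper bound for the $\ell_\infty$-FGL of multi-layer networks.) Let $d\ge2$, let $n_1,\dots,n_d\ge1$, let $W_i\in\mathbb{R}^{n_{i+1}\times n_i}$ for $i\in[d-1]$, let $u\in\mathbb{R}^{1\times n_d}$, and let $a\le b$ be real. Let $\zeta\in\mathbb{R}$ and $\Lambda_i\in\mathbb{R}^{n_i}_+$ for $i\in[d]$, and put $T_i=\mathrm{diag}(\Lambda_i)$. Let $M$ be the symmetric block matrix with block rows/columns indexed by $0,1,\dots,d$ of sizes $1,n_1,\dots,n_d$, whose nonzero blocks are: - $M_{00}=\sum_{k=1}^{n_1}(\Lambda_1)_k-\zeta$, $M_{0d}=u$, $M_{d0}=u^T$; - $M_{11}=-T_1-2ab\,W_1^TT_2W_1$; - $M_{ii}=-2T_i-2ab\,W_i^TT_{i+1}W_i$ for $2\le i\le d-1$; - $M_{dd}=-2T_d$; - $M_{i,i+1}=(a+b)W_i^TT_{i+1}$ and $M_{i+1,i}=(a+b)T_{i+1}W_i$ for $1\le i\le d-1$ (when $d=2$, the blocks $M_{0d}$ and $M_{d0}$ are added to the listed ones; all other blocks are zero). If $M\preceq0$, then $$\frac{\zeta}{2}\;\ge\;\max_{v_i\in[a,b]^{n_{i+1}},\ i\in[d-1]}\big\|W_1^T\mathrm{diag}(v_1)W_2^T\mathrm{diag}(v_2)\cdots W_{d-1}^T\mathrm{diag}(v_{d-1})u^T\big\|_1 .$$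
   Context: $\mathrm{diag}(v)$ is the diagonal matrix with diagonal $v$; $P\preceq0$ means $-P$ is positive semidefinite; $\mathbb{R}_+=[0,\infty)$. The right-hand side is the $\ell_\infty$ formal global Lipschitz constant of the network $x\mapsto u\,\sigma(W_{d-1}\cdots\sigma(W_1x))$ whose activation $\sigma$ has derivative in $[a,b]$ (for ReLU, $a=0,b=1$): the maximum $\ell_1$-norm of the formal gradient when every activation derivative is treated as an independent value in $[a,b]$. *)

theory Defs
  imports "HOL-Analysis.Analysis"
begin

(* Conventions: layer widths n :: nat => nat (n i for i = 1..d);
   W i r c = (W_i)_{r,c}, r < n (Suc i), c < n i, for i = 1..d-1;
   u c = u_{1,c}, c < n d;  Lam i k = (Lambda_i)_k, k < n i, i = 1..d;
   v i k = (v_i)_k, k < n (Suc i), i = 1..d-1.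
   Matrices are functions nat => nat => real with explicit bounds. *)

definition blk_size :: "(nat \<Rightarrow> nat) \<Rightarrow> nat \<Rightarrow> nat" where
  "blk_size n i = (if i = 0 then 1 else n i)"

definition blk_off :: "(nat \<Rightarrow> nat) \<Rightarrow> nat \<Rightarrow> nat" where
  "blk_off n i = (\<Sum>j<i. blk_size n j)"

definition tot_dim :: "(nat \<Rightarrow> nat) \<Rightarrow> nat \<Rightarrow> nat" where
  "tot_dim n d = blk_off n (Suc d)"

definition blk_of :: "(nat \<Rightarrow> nat) \<Rightarrow> nat \<Rightarrow> nat \<Rightarrow> nat" where
  "blk_of n d p = (THE i. i \<le> d \<and> blk_off n i \<le> p \<and> p < blk_off n (Suc i))"

definition M_block :: "nat \<Rightarrow> (nat \<Rightarrow> nat) \<Rightarrow> (nat \<Rightarrow> nat \<Rightarrow> nat \<Rightarrow> real) \<Rightarrow>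
    (nat \<Rightarrow> real) \<Rightarrow> real \<Rightarrow> real \<Rightarrow> real \<Rightarrow> (nat \<Rightarrow> nat \<Rightarrow> real) \<Rightarrow>
    nat \<Rightarrow> nat \<Rightarrow> nat \<Rightarrow> nat \<Rightarrow> real" where
  "M_block d n W u a b \<zeta> Lam i j r c =
    (if i = 0 \<and> j = 0 then (\<Sum>k<n 1. Lam 1 k) - \<zeta>
     else if i = 0 \<and> j = d then u c
     else if i = d \<and> j = 0 then u r
     else if i = 1 \<and> j = 1 then
       - (if r = c then Lam 1 r else 0)
       - 2 * a * b * (\<Sum>k<n 2. W 1 k r * Lam 2 k * W 1 k c)
     else if 2 \<le> i \<and> i \<le> d - 1 \<and> j = i then
       - 2 * (if r = c then Lam i r else 0)
       - 2 * a * b * (\<Sum>k<n (Suc i). W i k r * Lam (Suc i) k * W i k c)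
     else if i = d \<and> j = d then - 2 * (if r = c then Lam d r else 0)
     else if 1 \<le> i \<and> i \<le> d - 1 \<and> j = Suc i then (a + b) * W i c r * Lam (Suc i) c
     else if 1 \<le> j \<and> j \<le> d - 1 \<and> i = Suc j then (a + b) * Lam i r * W j r c
     else 0)"

definition M_mat :: "nat \<Rightarrow> (nat \<Rightarrow> nat) \<Rightarrow> (nat \<Rightarrow> nat \<Rightarrow> nat \<Rightarrow> real) \<Rightarrow>
    (nat \<Rightarrow> real) \<Rightarrow> real \<Rightarrow> real \<Rightarrow> real \<Rightarrow> (nat \<Rightarrow> nat \<Rightarrow> real) \<Rightarrow>
    nat \<Rightarrow> nat \<Rightarrow> real" where
  "M_mat d n W u a b \<zeta> Lam p q =
    (let i = blk_of n d p; j = blk_of n d q in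
     M_block d n W u a b \<zeta> Lam i j (p - blk_off n i) (q - blk_off n j))"

definition neg_semidef :: "nat \<Rightarrow> (nat \<Rightarrow> nat \<Rightarrow> real) \<Rightarrow> bool" where
  "neg_semidef N P \<longleftrightarrow> (\<forall>x::nat \<Rightarrow> real. (\<Sum>p<N. \<Sum>q<N. x p * (- P p q) * x q) \<ge> 0)"

(* back m = W_(d-m)^T diag(v_(d-m)) ... W_(d-1)^T diag(v_(d-1)) u^T, a vector of layer d-m *)
fun back_grad :: "nat \<Rightarrow> (nat \<Rightarrow> nat) \<Rightarrow> (nat \<Rightarrow> nat \<Rightarrow> nat \<Rightarrow> real) \<Rightarrow>
    (nat \<Rightarrow> nat \<Rightarrow> real) \<Rightarrow> (nat \<Rightarrow> real) \<Rightarrow> nat \<Rightarrow> nat \<Rightarrow> real" where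
  "back_grad d n W v u 0 = u"
| "back_grad d n W v u (Suc m) =
     (\<lambda>c. \<Sum>r<n (d - m). W (d - m - 1) r c * v (d - m - 1) r * back_grad d n W v u m r)"

definition formal_grad_l1 :: "nat \<Rightarrow> (nat \<Rightarrow> nat) \<Rightarrow> (nat \<Rightarrow> nat \<Rightarrow> nat \<Rightarrow> real) \<Rightarrow>
    (nat \<Rightarrow> nat \<Rightarrow> real) \<Rightarrow> (nat \<Rightarrow> real) \<Rightarrow> real" where
  "formal_grad_l1 d n W v u = (\<Sum>c<n 1. \<bar>back_grad d n W v u (d - 1) c\<bar>)"

end

theory Submission
  imports Defs
begin

lemma L1: "(\<Sum>r<(N::nat). \<Sum>c<N. x r * (if r = c then L r else 0) * x c) = (\<Sum>r<N. L r * (x r)^2::real)"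
proof (intro sum.cong refl)
  fix r assume "r \<in> {..<N}"
  have "(\<Sum>c<N. x r * (if r = c then L r else 0) * x c) = (\<Sum>c<N. if r = c then x r * L r * x r else 0)"
    by (intro sum.cong refl) auto
  also have "\<dots> = L r * (x r)^2" using \<open>r \<in> {..<N}\<close> by (subst sum.delta') (auto simp: power2_eq_square)
  finally show "(\<Sum>c<N. x r * (if r = c then L r else 0) * x c) = L r * (x r)^2" .
qed
lemma L2: "(\<Sum>r<N. \<Sum>c<N. x r * (\<Sum>k<K. W k r * L k * W k c) * x c) = (\<Sum>k<K. L k * (\<Sum>c<N. W k c * x c)^2::real)"
  by (simp add: power2_eq_square sum_product sum_distrib_left sum_distrib_right algebra_simps sum.swap[of _ "{..<K}"])
lemma L3: "(\<Sum>r<N. \<Sum>c<K. x r * (\<alpha> * W c r * L c) * w c) = \<alpha> * (\<Sum>c<K. L c * (\<Sum>r<N. W c r * x r) * w c::real)"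
  by (simp add: sum_distrib_left sum_distrib_right algebra_simps sum.swap[of _ "{..<K}"])
lemma L3': "(\<Sum>r<K. \<Sum>c<N. w r * (\<alpha> * L r * W r c) * x c) = \<alpha> * (\<Sum>r<K. L r * (\<Sum>c<N. W r c * x c) * w r::real)"
  by (simp add: sum_distrib_left sum_distrib_right algebra_simps)

lemma LD: "(\<Sum>r<(N::nat). \<Sum>c<N. x r * (- (\<gamma> * (if r = c then L r else 0)) - \<delta> * (\<Sum>k<K. W k r * L' k * W k c)) * x c)
  = - \<gamma> * (\<Sum>r<N. L r * (x r)^2) - \<delta> * (\<Sum>k<K. L' k * (\<Sum>c<N. W k c * x c)^2::real)"
proof -
  have "(\<Sum>r<N. \<Sum>c<N. x r * (- (\<gamma> * (if r = c then L r else 0)) - \<delta> * (\<Sum>k<K. W k r * L' k * W k c)) * x c)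
    = - \<gamma> * (\<Sum>r<N. \<Sum>c<N. x r * (if r = c then L r else 0) * x c) - \<delta> * (\<Sum>r<N. \<Sum>c<N. x r * (\<Sum>k<K. W k r * L' k * W k c) * x c)"
    by (simp add: sum_distrib_left algebra_simps sum_subtractf sum.distrib sum_negf)
  then show ?thesis by (simp only: L1 L2)
qed

lemma blk_off_Suc: "blk_off n (Suc i) = blk_off n i + blk_size n i"
  by (simp add: blk_off_def)
lemma blk_off_mono: "i \<le> j \<Longrightarrow> blk_off n i \<le> blk_off n j"
  by (induction j rule: dec_induct) (auto simp: blk_off_Suc)
lemma blk_of_eq: assumes "i \<le> d" "r < blk_size n i"
  shows "blk_of n d (blk_off n i + r) = i"
  unfolding blk_of_def
proof (rule the_equality)
  show "i \<le> d \<and> blk_off n i \<le> blk_off n i + r \<and> blk_off n i + r < blk_off n (Suc i)"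
    using assms by (simp add: blk_off_Suc)
next
  fix j assume j: "j \<le> d \<and> blk_off n j \<le> blk_off n i + r \<and> blk_off n i + r < blk_off n (Suc j)"
  show "j = i"
  proof (rule ccontr)
    assume "j \<noteq> i"
    then consider "Suc j \<le> i" | "Suc i \<le> j" by linarith
    then show False
    proof cases
      case 1 then have "blk_off n (Suc j) \<le> blk_off n i" by (rule blk_off_mono)
      with j show False by linarith
    next
      case 2 then have "blk_off n (Suc i) \<le> blk_off n j" by (rule blk_off_mono)
      with j assms show False by (simp add: blk_off_Suc)
    qed
  qed
qed

lemma sum_add_split: "(\<Sum>p<A + (B::nat). g p) = (\<Sum>p<A. g p) + (\<Sum>r<B. g (A + r))"
  by (induction B) (simp_all add: add.assoc)

lemma sum_blocks: "(\<Sum>p<blk_off n m. g p) = (\<Sum>i<m. \<Sum>r<blk_size n i. g (blk_off n i + r))"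
  by (induction m) (simp_all add: blk_off_Suc sum_add_split, simp add: blk_off_def)

lemma flatten:
  fixes n :: "nat \<Rightarrow> nat" and d :: nat and z :: "nat \<Rightarrow> nat \<Rightarrow> real" and Mb :: "nat \<Rightarrow> nat \<Rightarrow> nat \<Rightarrow> nat \<Rightarrow> real"
  defines "xg \<equiv> \<lambda>p. z (blk_of n d p) (p - blk_off n (blk_of n d p))"
  defines "Mm \<equiv> \<lambda>p q. Mb (blk_of n d p) (blk_of n d q) (p - blk_off n (blk_of n d p)) (q - blk_off n (blk_of n d q))"
  shows "(\<Sum>p<blk_off n (Suc d). \<Sum>q<blk_off n (Suc d). xg p * Mm p q * xg q)
    = (\<Sum>i<Suc d. \<Sum>j<Suc d. \<Sum>r<blk_size n i. \<Sum>c<blk_size n j. z i r * Mb i j r c * z j c)"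
proof -
  have "(\<Sum>p<blk_off n (Suc d). \<Sum>q<blk_off n (Suc d). xg p * Mm p q * xg q)
     = (\<Sum>i<Suc d. \<Sum>r<blk_size n i. \<Sum>j<Suc d. \<Sum>c<blk_size n j. xg (blk_off n i + r) * Mm (blk_off n i + r) (blk_off n j + c) * xg (blk_off n j + c))"
    by (simp add: sum_blocks)
  also have "\<dots> = (\<Sum>i<Suc d. \<Sum>r<blk_size n i. \<Sum>j<Suc d. \<Sum>c<blk_size n j. z i r * Mb i j r c * z j c)"
    by (intro sum.cong refl) (simp add: xg_def Mm_def blk_of_eq)
  also have "\<dots> = (\<Sum>i<Suc d. \<Sum>j<Suc d. \<Sum>r<blk_size n i. \<Sum>c<blk_size n j. z i r * Mb i j r c * z j c)"
    by (rule sum.cong[OF refl], rule sum.swap)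
  finally show ?thesis .
qed

primrec xs :: "(nat\<Rightarrow>nat) \<Rightarrow> (nat\<Rightarrow>nat\<Rightarrow>nat\<Rightarrow>real) \<Rightarrow> (nat\<Rightarrow>nat\<Rightarrow>real) \<Rightarrow> (nat\<Rightarrow>real) \<Rightarrow> nat \<Rightarrow> nat \<Rightarrow> real" where
  "xs n W v s 0 = s"
| "xs n W v s (Suc i) = (if i = 0 then s else (\<lambda>k. v i k * (\<Sum>c<n i. W i k c * xs n W v s i c)))"

lemma duality:
  assumes "m \<le> d - 1"
  shows "(\<Sum>c<n (d - m). back_grad d n W v u m c * xs n W v s (d - m) c) = (\<Sum>c<n d. u c * xs n W v s d c)"
  using assms
proof (induction m)
  case 0 then show ?case by simp
next
  case (Suc m)
  define L where "L = d - Suc m"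
  have L1: "L \<ge> 1" and dm: "d - m = Suc L" using Suc.prems by (auto simp: L_def)
  have "(\<Sum>c<n (d - Suc m). back_grad d n W v u (Suc m) c * xs n W v s (d - Suc m) c)
     = (\<Sum>c<n L. (\<Sum>r<n (Suc L). W L r c * v L r * back_grad d n W v u m r) * xs n W v s L c)"
    by (simp add: L_def[symmetric] dm)
  also have "\<dots> = (\<Sum>r<n (Suc L). back_grad d n W v u m r * (v L r * (\<Sum>c<n L. W L r c * xs n W v s L c)))"
    by (simp add: sum_distrib_left sum_distrib_right algebra_simps sum.swap[of _ "{..<n L}"])
  also have "\<dots> = (\<Sum>r<n (d - m). back_grad d n W v u m r * xs n W v s (d - m) r)"
    using L1 by (simp add: dm)
  also have "\<dots> = (\<Sum>c<n d. u c * xs n W v s d c)" using Suc by simp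
  finally show ?case .
qed

lemma sdelta: "finite S \<Longrightarrow> (\<And>j. C j = (j = t \<and> Q)) \<Longrightarrow> (\<Sum>j\<in>S. if C j then f else 0) = (if t \<in> S \<and> Q then f else (0::real))"
  by (cases Q) (simp_all add: sum.delta)

lemma sfilt: "(\<Sum>i<Suc (d::nat). if P i then f i else 0) = (\<Sum>i\<in>{i. i < Suc d \<and> P i}. f i::real)"
proof -
  have "(\<Sum>i<Suc (d::nat). if P i then f i else 0) = sum f {x\<in>{..<Suc d}. P x}"
    by (rule sum.inter_filter[symmetric]) simp
  also have "{x\<in>{..<Suc d}. P x} = {i. i < Suc d \<and> P i}" by auto
  finally show ?thesis .
qed

theorem mainTheorem10:
  fixes d :: nat and n :: "nat \<Rightarrow> nat"
    and W :: "nat \<Rightarrow> nat \<Rightarrow> nat \<Rightarrow> real" and u :: "nat \<Rightarrow> real"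
    and a b \<zeta> :: real and Lam :: "nat \<Rightarrow> nat \<Rightarrow> real"
  assumes "d \<ge> 2"
    and "\<forall>i\<in>{1..d}. n i \<ge> 1"
    and "a \<le> b"
    and "\<forall>i\<in>{1..d}. \<forall>k<n i. Lam i k \<ge> 0"
    and "neg_semidef (tot_dim n d) (M_mat d n W u a b \<zeta> Lam)"
  shows "\<forall>v :: nat \<Rightarrow> nat \<Rightarrow> real.
           (\<forall>i\<in>{1..d-1}. \<forall>k<n (Suc i). a \<le> v i k \<and> v i k \<le> b)
           \<longrightarrow> formal_grad_l1 d n W v u \<le> \<zeta> / 2"
proof (intro allI impI)
  fix v :: "nat \<Rightarrow> nat \<Rightarrow> real"
  assume hv: "\<forall>i\<in>{1..d-1}. \<forall>k<n (Suc i). a \<le> v i k \<and> v i k \<le> b"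
  have d2: "d \<ge> 2" by fact
  define g where "g = back_grad d n W v u (d-1)"
  define s where "s = (\<lambda>c. if g c \<ge> 0 then (1::real) else -1)"
  define x where "x = xs n W v s"
  define y where "y = (\<lambda>i k. \<Sum>c<n i. W i k c * x i c)"
  have x1: "x 1 = s" by (simp add: x_def)
  have xS: "\<And>i. i \<ge> 1 \<Longrightarrow> x (Suc i) = (\<lambda>k. v i k * y i k)"
    by (simp add: x_def y_def)
  define U where "U = (\<Sum>c<n d. u c * x d c)"
  have dual: "formal_grad_l1 d n W v u = U"
  proof -
    have dd: "d - (d - 1) = 1" using d2 by simp
    have "formal_grad_l1 d n W v u = (\<Sum>c<n 1. g c * s c)"
      unfolding formal_grad_l1_def g_def[symmetric] s_def
      by (intro sum.cong refl) auto
    also have "\<dots> = U"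
      using duality[where m="d-1" and d=d and n=n and W=W and v=v and u=u and s=s] unfolding dd U_def x_def g_def
      by (simp add: x1[unfolded x_def])
    finally show ?thesis .
  qed
  define z where "z = (\<lambda>i. if i = 0 then (\<lambda>_. 1::real) else x i)"
  define B where "B = (\<lambda>i j. \<Sum>r<blk_size n i. \<Sum>c<blk_size n j. z i r * M_block d n W u a b \<zeta> Lam i j r c * z j c)"
  have Qle: "(\<Sum>i<Suc d. \<Sum>j<Suc d. B i j) \<le> 0"
  proof -
    define xg where "xg = (\<lambda>p. z (blk_of n d p) (p - blk_off n (blk_of n d p)))"
    have "0 \<le> (\<Sum>p<tot_dim n d. \<Sum>q<tot_dim n d. xg p * (- M_mat d n W u a b \<zeta> Lam p q) * xg q)"
      using assms(5) unfolding neg_semidef_def by blast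
    also have "\<dots> = - (\<Sum>p<tot_dim n d. \<Sum>q<tot_dim n d. xg p * M_mat d n W u a b \<zeta> Lam p q * xg q)"
      by (simp add: sum_negf)
    also have "(\<Sum>p<tot_dim n d. \<Sum>q<tot_dim n d. xg p * M_mat d n W u a b \<zeta> Lam p q * xg q)
        = (\<Sum>i<Suc d. \<Sum>j<Suc d. B i j)"
      unfolding tot_dim_def B_def xg_def M_mat_def Let_def
      by (rule flatten)
    finally show ?thesis by simp
  qed
  define P where "P = (\<lambda>i. \<Sum>r<n i. Lam i r * (x i r)^2)"
  define Y where "Y = (\<lambda>i. \<Sum>k<n (Suc i). Lam (Suc i) k * (y i k)^2)"
  define Of where "Of = (\<lambda>i. \<Sum>k<n (Suc i). Lam (Suc i) k * y i k * x (Suc i) k)"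
  define A where "A = (\<Sum>k<n 1. Lam 1 k) - \<zeta>"
  define D where "D = (\<lambda>i. - (if i = 1 then 1 else 2) * P i - (if i \<le> d-1 then 2*a*b*Y i else 0))"
  define F where "F = (\<lambda>i j. (if i=0 \<and> j=0 then A else 0) + (if i=0 \<and> j=d then U else 0)
     + (if i=d \<and> j=0 then U else 0) + (if i=j \<and> 1 \<le> i then D i else 0)
     + (if j = Suc i \<and> 1\<le>i \<and> i\<le>d-1 then (a+b)*Of i else 0)
     + (if i = Suc j \<and> 1\<le>j \<and> j\<le>d-1 then (a+b)*Of j else 0))"
  have BF: "B i j = F i j" if hi: "i \<le> d" and hj: "j \<le> d" for i j
  proof -
    have Bxx: "B i j = (\<Sum>r<n i. \<Sum>c<n j. x i r * M_block d n W u a b \<zeta> Lam i j r c * x j c)" if "i \<ge> 1" "j \<ge> 1" for i j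
      using that by (simp add: B_def z_def blk_size_def)
    have disj: "(i=0 \<and> j=0) \<or> (i=0 \<and> j=d) \<or> (i=d \<and> j=0) \<or> (i=0 \<and> j\<noteq>0 \<and> j\<noteq>d)
      \<or> (j=0 \<and> i\<noteq>0 \<and> i\<noteq>d) \<or> (i=1 \<and> j=1) \<or> (i=j \<and> 2\<le>i \<and> i\<le>d-1) \<or> (i=d \<and> j=d)
      \<or> (j=Suc i \<and> 1\<le>i) \<or> (i=Suc j \<and> 1\<le>j) \<or> (1\<le>i \<and> 1\<le>j \<and> i\<noteq>j \<and> j\<noteq>Suc i \<and> i\<noteq>Suc j)"
      using hi hj d2 by (cases "i = 0"; cases "j = 0"; auto)
    consider (c00) "i=0" "j=0" | (c0d) "i=0" "j=d" | (cd0) "i=d" "j=0" | (c0x) "i=0" "j\<noteq>0" "j\<noteq>d"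
      | (cx0) "j=0" "i\<noteq>0" "i\<noteq>d" | (c11) "i=1" "j=1" | (cii) "i=j" "2\<le>i" "i\<le>d-1" | (cdd) "i=d" "j=d"
      | (up) "j=Suc i" "1\<le>i" | (lo) "i=Suc j" "1\<le>j" | (oth) "1\<le>i" "1\<le>j" "i\<noteq>j" "j\<noteq>Suc i" "i\<noteq>Suc j"
      using disj by blast
    then show ?thesis
    proof cases
      case c00 then show ?thesis using d2 by (simp add: B_def z_def blk_size_def M_block_def F_def A_def)
    next
      case c0d then show ?thesis using d2 by (simp add: B_def z_def blk_size_def M_block_def F_def U_def)
    next
      case cd0 then show ?thesis using d2 by (simp add: B_def z_def blk_size_def M_block_def F_def U_def mult.commute)
    next
      case c0x then show ?thesis using d2 by (simp add: B_def z_def blk_size_def M_block_def F_def)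
    next
      case cx0 then show ?thesis using d2 by (simp add: B_def z_def blk_size_def M_block_def F_def)
    next
      case c11
      have "B 1 1 = (\<Sum>r<n 1. \<Sum>c<n 1. x 1 r * (- (1 * (if r = c then Lam 1 r else 0)) - (2*a*b) * (\<Sum>k<n (Suc 1). W 1 k r * Lam (Suc 1) k * W 1 k c)) * x 1 c)"
        unfolding Bxx[OF le_refl le_refl] using d2 by (intro sum.cong refl) (simp add: M_block_def numeral_2_eq_2)
      also have "\<dots> = - 1 * P 1 - (2*a*b) * Y 1" unfolding P_def Y_def y_def by (rule LD)
      finally show ?thesis using c11 d2 by (simp add: F_def D_def)
    next
      case cii
      have "B i i = (\<Sum>r<n i. \<Sum>c<n i. x i r * (- (2 * (if r = c then Lam i r else 0)) - (2*a*b) * (\<Sum>k<n (Suc i). W i k r * Lam (Suc i) k * W i k c)) * x i c)"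
        using d2 cii unfolding Bxx[of i i, OF order.trans[OF _ cii(2)] order.trans[OF _ cii(2)], simplified] by (intro sum.cong refl) (simp add: M_block_def)
      also have "\<dots> = - 2 * P i - (2*a*b) * Y i" unfolding P_def Y_def y_def by (rule LD)
      finally show ?thesis using cii d2 by (simp add: F_def D_def)
    next
      case cdd
      have "B d d = (\<Sum>r<n d. \<Sum>c<n d. x d r * (- (2 * (if r = c then Lam d r else 0)) - 0 * (\<Sum>k<(0::nat). W d k r * Lam d k * W d k c)) * x d c)"
        using d2 cdd unfolding Bxx[of d d, OF order.trans[OF _ d2] order.trans[OF _ d2], simplified] by (intro sum.cong refl) (simp add: M_block_def)
      also have "\<dots> = - 2 * P d - 0 * (\<Sum>k<(0::nat). Lam d k * (\<Sum>c<n d. W d k c * x d c)^2)" unfolding P_def by (rule LD)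
      finally show ?thesis using cdd d2 by (simp add: F_def D_def)
    next
      case up
      have "B i (Suc i) = (\<Sum>r<n i. \<Sum>c<n (Suc i). x i r * ((a+b) * W i c r * Lam (Suc i) c) * x (Suc i) c)"
        using d2 up hj unfolding Bxx[of i "Suc i", OF up(2), simplified] by (intro sum.cong refl) (simp add: M_block_def)
      also have "\<dots> = (a+b) * Of i" unfolding Of_def y_def by (rule L3)
      finally show ?thesis using up d2 hj by (simp add: F_def)
    next
      case lo
      have "B (Suc j) j = (\<Sum>r<n (Suc j). \<Sum>c<n j. x (Suc j) r * ((a+b) * Lam (Suc j) r * W j r c) * x j c)"
        using d2 lo hi unfolding Bxx[of "Suc j" j, OF _ lo(2), simplified] by (intro sum.cong refl) (simp add: M_block_def)
      also have "\<dots> = (a+b) * Of j" unfolding Of_def y_def by (rule L3')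
      finally show ?thesis using lo d2 hi by (simp add: F_def)
    next
      case oth
      have "B i j = (\<Sum>r<n i. \<Sum>c<n j. 0)"
        unfolding Bxx[OF oth(1,2)] using d2 oth hi hj by (intro sum.cong refl) (simp add: M_block_def)
      then show ?thesis using oth d2 by (simp add: F_def)
    qed
  qed
  have sumF: "(\<Sum>i<Suc d. \<Sum>j<Suc d. F i j) = A + 2*U + (\<Sum>i\<in>{1..d}. D i) + 2*(a+b)*(\<Sum>i\<in>{1..d-1}. Of i)"
  proof -
    have h1i: "(\<Sum>j<Suc d. if i=0 \<and> j=0 then A else 0) = (if i = 0 then A else 0)" for i
      by (rule trans[OF sdelta[where t=0 and Q="i=0"]]) auto
    have h2i: "(\<Sum>j<Suc d. if i=0 \<and> j=d then U else 0) = (if i = 0 then U else 0)" for i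
      by (rule trans[OF sdelta[where t=d and Q="i=0"]]) auto
    have h3i: "(\<Sum>j<Suc d. if i=d \<and> j=0 then U else 0) = (if i = d then U else 0)" for i
      by (rule trans[OF sdelta[where t=0 and Q="i=d"]]) auto
    have h4i: "(\<Sum>j<Suc d. if i=j \<and> 1 \<le> i then D i else 0) = (if i < Suc d \<and> 1 \<le> i then D i else 0)" for i
      by (rule trans[OF sdelta[where t=i and Q="1 \<le> i"]]) auto
    have h5i: "(\<Sum>j<Suc d. if j = Suc i \<and> 1\<le>i \<and> i\<le>d-1 then (a+b)*Of i else 0) = (if 1\<le>i \<and> i\<le>d-1 then (a+b)*Of i else 0)" for i
      by (rule trans[OF sdelta[where t="Suc i" and Q="1\<le>i \<and> i\<le>d-1"]]) (use d2 in auto)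
    have h6i: "(\<Sum>i<Suc d. if i = Suc j \<and> 1\<le>j \<and> j\<le>d-1 then (a+b)*Of j else 0) = (if 1\<le>j \<and> j\<le>d-1 then (a+b)*Of j else 0)" for j
      by (rule trans[OF sdelta[where t="Suc j" and Q="1\<le>j \<and> j\<le>d-1"]]) (use d2 in auto)
    have s1: "{i. i < Suc d \<and> 1 \<le> i \<and> i \<le> d - 1} = {1..d-1}" by auto
    have s2: "{i. i < Suc d \<and> (i < Suc d \<and> 1 \<le> i)} = {1..d}" by auto
    have "(\<Sum>i<Suc d. \<Sum>j<Suc d. F i j) =
       (\<Sum>i<Suc d. \<Sum>j<Suc d. if i=0 \<and> j=0 then A else 0) + (\<Sum>i<Suc d. \<Sum>j<Suc d. if i=0 \<and> j=d then U else 0)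
     + (\<Sum>i<Suc d. \<Sum>j<Suc d. if i=d \<and> j=0 then U else 0) + (\<Sum>i<Suc d. \<Sum>j<Suc d. if i=j \<and> 1 \<le> i then D i else 0)
     + (\<Sum>i<Suc d. \<Sum>j<Suc d. if j = Suc i \<and> 1\<le>i \<and> i\<le>d-1 then (a+b)*Of i else 0)
     + (\<Sum>j<Suc d. \<Sum>i<Suc d. if i = Suc j \<and> 1\<le>j \<and> j\<le>d-1 then (a+b)*Of j else 0)"
      unfolding F_def by (simp only: sum.distrib sum.swap[where g="\<lambda>i j. if i = Suc j \<and> 1\<le>j \<and> j\<le>d-1 then (a+b)*Of j else 0"])
    also have "\<dots> = A + U + U + (\<Sum>i<Suc d. if i < Suc d \<and> 1 \<le> i then D i else 0)
      + (\<Sum>i<Suc d. if 1\<le>i \<and> i\<le>d-1 then (a+b)*Of i else 0) + (\<Sum>i<Suc d. if 1\<le>i \<and> i\<le>d-1 then (a+b)*Of i else 0)"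
      by (simp only: h1i h2i h3i h4i h5i h6i sum.delta finite_lessThan) simp
    also have "\<dots> = A + 2*U + (\<Sum>i\<in>{1..d}. D i) + 2*(a+b)*(\<Sum>i\<in>{1..d-1}. Of i)"
      by (simp only: sfilt s1 s2) (simp add: sum_distrib_left algebra_simps sum.distrib)
    finally show ?thesis .
  qed
  have sumD: "(\<Sum>i\<in>{1..d}. D i) = -P 1 - 2*(\<Sum>i\<in>{1..d-1}. P (Suc i)) - 2*a*b*(\<Sum>i\<in>{1..d-1}. Y i)"
  proof -
    have "(\<Sum>i\<in>{1..d}. D i) = - (\<Sum>i\<in>{1..d}. (if i = 1 then 1 else 2) * P i) - (\<Sum>i\<in>{1..d}. if i \<le> d-1 then 2*a*b*Y i else 0)"
      unfolding D_def by (simp add: sum_subtractf sum_negf)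
    also have "(\<Sum>i\<in>{1..d}. if i \<le> d-1 then 2*a*b*Y i else 0) = (\<Sum>i\<in>{x\<in>{1..d}. x \<le> d-1}. 2*a*b*Y i)"
      by (rule sum.inter_filter[symmetric]) simp
    also have "{x\<in>{1..d}. x \<le> d-1} = {1..d-1}" by auto
    also have "(\<Sum>i\<in>{1..d}. (if i = 1 then 1 else 2) * P i) = P 1 + (\<Sum>i\<in>{Suc 1..Suc (d-1)}. (if i = 1 then 1 else 2) * P i)"
      using d2 by (subst sum.atLeast_Suc_atMost) auto
    also have "(\<Sum>i\<in>{Suc 1..Suc (d-1)}. (if i = 1 then 1 else 2) * P i) = (\<Sum>i\<in>{1..d-1}. (if Suc i = 1 then 1 else 2) * P (Suc i))"
      by (rule sum.shift_bounds_cl_Suc_ivl)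
    also have "\<dots> = 2 * (\<Sum>i\<in>{1..d-1}. P (Suc i))" by (simp add: sum_distrib_left)
    finally show ?thesis by (simp add: sum_distrib_left)
  qed
  have AP: "A - P 1 = -\<zeta>"
  proof -
    have "P 1 = (\<Sum>k<n 1. Lam 1 k)" unfolding P_def x1
      by (intro sum.cong refl) (simp add: s_def)
    then show ?thesis by (simp add: A_def)
  qed
  have tnn: "-2*P(Suc i) - 2*a*b*Y i + 2*(a+b)*Of i \<ge> 0" if hi: "i\<in>{1..d-1}" for i
  proof -
    have "-2*P(Suc i) - 2*a*b*Y i + 2*(a+b)*Of i
      = (\<Sum>k<n (Suc i). 2 * Lam (Suc i) k * ((y i k)^2 * ((v i k - a) * (b - v i k))))"
      unfolding P_def Y_def Of_def using hi
      by (simp add: xS sum_distrib_left sum_subtractf[symmetric] sum.distrib[symmetric] power2_eq_square algebra_simps)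
    also have "\<dots> \<ge> 0"
    proof (intro sum_nonneg)
      fix k assume k: "k \<in> {..<n (Suc i)}"
      have "Lam (Suc i) k \<ge> 0" using assms(4) hi k by auto
      moreover have "v i k - a \<ge> 0" "b - v i k \<ge> 0" using hv hi k by auto
      ultimately show "0 \<le> 2 * Lam (Suc i) k * ((y i k)^2 * ((v i k - a) * (b - v i k)))"
        by simp
    qed
    finally show ?thesis .
  qed
  have "(\<Sum>i<Suc d. \<Sum>j<Suc d. B i j) = -\<zeta> + 2*U + (\<Sum>i\<in>{1..d-1}. -2*P(Suc i) - 2*a*b*Y i + 2*(a+b)*Of i)"
  proof -
    have "(\<Sum>i<Suc d. \<Sum>j<Suc d. B i j) = (\<Sum>i<Suc d. \<Sum>j<Suc d. F i j)"
      by (intro sum.cong refl) (simp add: BF)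
    also have "\<dots> = (A - P 1) + 2*U + (\<Sum>i\<in>{1..d-1}. -2*P(Suc i) - 2*a*b*Y i + 2*(a+b)*Of i)"
      unfolding sumF sumD by (simp add: sum.distrib sum_subtractf sum_distrib_left algebra_simps)
    finally show ?thesis using AP by simp
  qed
  moreover have "(\<Sum>i\<in>{1..d-1}. -2*P(Suc i) - 2*a*b*Y i + 2*(a+b)*Of i) \<ge> 0"
    by (rule sum_nonneg) (rule tnn)
  ultimately show "formal_grad_l1 d n W v u \<le> \<zeta> / 2" using Qle dual by linarith
qed

end
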